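(* The ai-semiring $\mathcal{B}_2^1$ lies in the variety of ai-semirings generated by $\mathcal{A}_2^1$, i.e., $\mathcal{B}_2^1$ satisfies every identity (in the signature $+,\cdot$) satisfied by $\mathcal{A}_2^1$.
   Context: An ai-semiring is a structure $(R,+,\cdot)$ with $(R,+)$ a semilattice, $(R,\cdot)$ a semigroup, and multiplication distributing over addition on both sides; in a semilattice, $s\le t$ iff $s+t=t$, and $s+t$ is the supremum. $\mathcal{A}_2^1$: Let $A_2=\langle e,a\mid eae=e^2=e,\ aea=a,\ a^2=0\rangle=\{e,a,ae,ea,0\}$, $A_2^1$ the monoid obtained by adjoining an identity $1$. Represent $A_2^1$ by order-preserving maps of the chain $0<1<2$ fixing $2$ (acting on the right, $x(\alpha\beta)=(x\alpha)\beta$): $1\mapsto$ identity; $ea\mapsto(0\mapsto1,1\mapsto1,2\mapsto2)$; $ae\mapsto(0\mapsto0,1\mapsto2,2\mapsto2)$; $a\mapsto(0\mapsto1,1\mapsto2,2\mapsto2)$; $e\mapsto(0\mapsto0,1\mapsto0,2\mapsto2)$; $0\mapsto$ constant map to $2$. Addition in $\mathcal{A}_2^1$ is pointwise maximum; its order is $e<1<ea<a<0$, $1<ae<a$ with $ea,ae$ incomparable. $\mathcal{B}_2^1$: $B_2=\langle c,d\mid cdc=c,\ dcd=d,\ c^2=d^2=0\rangle=\{c,d,cd,dc,0\}$, $B_2^1$ with identity $1$ adjoined; addition is the join in the order where $0$ is the top, $c,d,cd,dc$ lie directly below $0$, and $1$ lies below $cd$ and $dc$ only. *)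

theory Defs
  imports Main
begin

datatype sterm = Var nat | Plus sterm sterm | Times sterm sterm

fun eval :: "('a \<Rightarrow> 'a \<Rightarrow> 'a) \<Rightarrow> ('a \<Rightarrow> 'a \<Rightarrow> 'a) \<Rightarrow> (nat \<Rightarrow> 'a) \<Rightarrow> sterm \<Rightarrow> 'a" where
  "eval pl tm \<rho> (Var i) = \<rho> i"
| "eval pl tm \<rho> (Plus s t) = pl (eval pl tm \<rho> s) (eval pl tm \<rho> t)"
| "eval pl tm \<rho> (Times s t) = tm (eval pl tm \<rho> s) (eval pl tm \<rho> t)"

definition satisfies :: "('a \<Rightarrow> 'a \<Rightarrow> 'a) \<Rightarrow> ('a \<Rightarrow> 'a \<Rightarrow> 'a) \<Rightarrow> sterm \<Rightarrow> sterm \<Rightarrow> bool" where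
  "satisfies pl tm s t \<longleftrightarrow> (\<forall>\<rho>. eval pl tm \<rho> s = eval pl tm \<rho> t)"

datatype a21 = A1 | Ae | Aa | Aae | Aea | A0

text \<open>Representation by order-preserving maps of the chain 0<1<2 fixing 2,
  given as the triple of images of 0,1,2.\<close>
fun repA :: "a21 \<Rightarrow> nat \<times> nat \<times> nat" where
  "repA A1 = (0, 1, 2)"
| "repA Aea = (1, 1, 2)"
| "repA Aae = (0, 2, 2)"
| "repA Aa = (1, 2, 2)"
| "repA Ae = (0, 0, 2)"
| "repA A0 = (2, 2, 2)"

definition app :: "nat \<times> nat \<times> nat \<Rightarrow> nat \<Rightarrow> nat" where
  "app f x = (if x = 0 then fst f else if x = 1 then fst (snd f) else snd (snd f))"

definition timesA :: "a21 \<Rightarrow> a21 \<Rightarrow> a21" where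
  "timesA \<alpha> \<beta> = (THE \<gamma>. \<forall>x\<in>{0,1,2}. app (repA \<gamma>) x = app (repA \<beta>) (app (repA \<alpha>) x))"

definition plusA :: "a21 \<Rightarrow> a21 \<Rightarrow> a21" where
  "plusA \<alpha> \<beta> = (THE \<gamma>. \<forall>x\<in>{0,1,2}. app (repA \<gamma>) x = max (app (repA \<alpha>) x) (app (repA \<beta>) x))"

datatype b21 = B1 | Bc | Bd | Bcd | Bdc | B0

text \<open>Multiplication of B_2 = <c,d | cdc=c, dcd=d, c^2=d^2=0> with identity adjoined.\<close>
fun timesB :: "b21 \<Rightarrow> b21 \<Rightarrow> b21" where
  "timesB B1 y = y"
| "timesB x B1 = x"
| "timesB B0 y = B0"
| "timesB x B0 = B0"
| "timesB Bc Bc = B0"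
| "timesB Bc Bd = Bcd"
| "timesB Bc Bcd = B0"
| "timesB Bc Bdc = Bc"
| "timesB Bd Bc = Bdc"
| "timesB Bd Bd = B0"
| "timesB Bd Bcd = Bd"
| "timesB Bd Bdc = B0"
| "timesB Bcd Bc = Bc"
| "timesB Bcd Bd = B0"
| "timesB Bcd Bcd = Bcd"
| "timesB Bcd Bdc = B0"
| "timesB Bdc Bc = B0"
| "timesB Bdc Bd = Bd"
| "timesB Bdc Bcd = B0"
| "timesB Bdc Bdc = Bdc"

definition leB :: "b21 \<Rightarrow> b21 \<Rightarrow> bool" where
  "leB x y \<longleftrightarrow> x = y \<or> y = B0 \<or> (x = B1 \<and> (y = Bcd \<or> y = Bdc))"

definition plusB :: "b21 \<Rightarrow> b21 \<Rightarrow> b21" where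
  "plusB x y = (THE z. leB x z \<and> leB y z \<and> (\<forall>w. leB x w \<and> leB y w \<longrightarrow> leB z w))"

end

theory Submission
  imports Defs
begin

fun tA :: "a21 \<Rightarrow> a21 \<Rightarrow> a21" where

"tA A1 A1 = A1"
| "tA A1 Aea = Aea"
| "tA A1 Aae = Aae"
| "tA A1 Aa = Aa"
| "tA A1 Ae = Ae"
| "tA A1 A0 = A0"
| "tA Aea A1 = Aea"
| "tA Aea Aea = Aea"
| "tA Aea Aae = A0"
| "tA Aea Aa = A0"
| "tA Aea Ae = Ae"
| "tA Aea A0 = A0"
| "tA Aae A1 = Aae"
| "tA Aae Aea = Aa"
| "tA Aae Aae = Aae"
| "tA Aae Aa = Aa"
| "tA Aae Ae = Aae"
| "tA Aae A0 = A0"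
| "tA Aa A1 = Aa"
| "tA Aa Aea = Aa"
| "tA Aa Aae = A0"
| "tA Aa Aa = A0"
| "tA Aa Ae = Aae"
| "tA Aa A0 = A0"
| "tA Ae A1 = Ae"
| "tA Ae Aea = Aea"
| "tA Ae Aae = Ae"
| "tA Ae Aa = Aea"
| "tA Ae Ae = Ae"
| "tA Ae A0 = A0"
| "tA A0 A1 = A0"
| "tA A0 Aea = A0"
| "tA A0 Aae = A0"
| "tA A0 Aa = A0"
| "tA A0 Ae = A0"
| "tA A0 A0 = A0"

fun pA :: "a21 \<Rightarrow> a21 \<Rightarrow> a21" where

"pA A1 A1 = A1"
| "pA A1 Aea = Aea"
| "pA A1 Aae = Aae"
| "pA A1 Aa = Aa"
| "pA A1 Ae = A1"
| "pA A1 A0 = A0"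
| "pA Aea A1 = Aea"
| "pA Aea Aea = Aea"
| "pA Aea Aae = Aa"
| "pA Aea Aa = Aa"
| "pA Aea Ae = Aea"
| "pA Aea A0 = A0"
| "pA Aae A1 = Aae"
| "pA Aae Aea = Aa"
| "pA Aae Aae = Aae"
| "pA Aae Aa = Aa"
| "pA Aae Ae = Aae"
| "pA Aae A0 = A0"
| "pA Aa A1 = Aa"
| "pA Aa Aea = Aa"
| "pA Aa Aae = Aa"
| "pA Aa Aa = Aa"
| "pA Aa Ae = Aa"
| "pA Aa A0 = A0"
| "pA Ae A1 = A1"
| "pA Ae Aea = Aea"
| "pA Ae Aae = Aae"
| "pA Ae Aa = Aa"
| "pA Ae Ae = Ae"
| "pA Ae A0 = A0"
| "pA A0 A1 = A0"
| "pA A0 Aea = A0"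
| "pA A0 Aae = A0"
| "pA A0 Aa = A0"
| "pA A0 Ae = A0"
| "pA A0 A0 = A0"

fun pB :: "b21 \<Rightarrow> b21 \<Rightarrow> b21" where

"pB B1 B1 = B1"
| "pB B1 Bc = B0"
| "pB B1 Bd = B0"
| "pB B1 Bcd = Bcd"
| "pB B1 Bdc = Bdc"
| "pB B1 B0 = B0"
| "pB Bc B1 = B0"
| "pB Bc Bc = Bc"
| "pB Bc Bd = B0"
| "pB Bc Bcd = B0"
| "pB Bc Bdc = B0"
| "pB Bc B0 = B0"
| "pB Bd B1 = B0"
| "pB Bd Bc = B0"
| "pB Bd Bd = Bd"
| "pB Bd Bcd = B0"
| "pB Bd Bdc = B0"
| "pB Bd B0 = B0"
| "pB Bcd B1 = Bcd"
| "pB Bcd Bc = B0"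
| "pB Bcd Bd = B0"
| "pB Bcd Bcd = Bcd"
| "pB Bcd Bdc = B0"
| "pB Bcd B0 = B0"
| "pB Bdc B1 = Bdc"
| "pB Bdc Bc = B0"
| "pB Bdc Bd = B0"
| "pB Bdc Bcd = B0"
| "pB Bdc Bdc = Bdc"
| "pB Bdc B0 = B0"
| "pB B0 B1 = B0"
| "pB B0 Bc = B0"
| "pB B0 Bd = B0"
| "pB B0 Bcd = B0"
| "pB B0 Bdc = B0"
| "pB B0 B0 = B0"

definition SS :: "(a21 \<times> a21 \<times> b21) set" where
  "SS = {(A1, A1, B1), (Aa, Ae, Bc), (Ae, Aa, Bd), (Aa, A1, B0), (A1, Aa, B0), (A0, Ae, B0), (Aae, Aea, Bcd), (Aa, Aa, B0), (Aea, Aae, Bdc), (Ae, A0, B0), (A0, A1, B0), (A1, A0, B0), (Aa, Aea, B0), (A0, Aea, B0), (Aa, Aae, B0), (Aae, A0, B0), (Aa, A0, B0), (Aea, Aa, B0), (A0, Aae, B0), (A0, Aa, B0), (Aae, Aa, B0), (Aea, A0, B0), (A0, A0, B0)}"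

lemma repA_inj: "(\<forall>x\<in>{0,1,2}. app (repA \<gamma>) x = app (repA g) x) \<Longrightarrow> \<gamma> = g"
  by (cases \<gamma>; cases g; simp add: app_def)

lemma timesA_eq: "(\<forall>x\<in>{0,1,2}. app (repA g) x = app (repA \<beta>) (app (repA \<alpha>) x)) \<Longrightarrow> timesA \<alpha> \<beta> = g"
  unfolding timesA_def
  by (rule the_equality, assumption) (rule repA_inj, simp)

lemma plusA_eq: "(\<forall>x\<in>{0,1,2}. app (repA g) x = max (app (repA \<alpha>) x) (app (repA \<beta>) x)) \<Longrightarrow> plusA \<alpha> \<beta> = g"
  unfolding plusA_def
  by (rule the_equality, assumption) (rule repA_inj, simp)

lemma timesA_tA: "timesA x y = tA x y"
  by (cases x; cases y; rule timesA_eq; simp add: app_def)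

lemma plusA_pA: "plusA x y = pA x y"
  by (cases x; cases y; rule plusA_eq; simp add: app_def)

lemma leB_antisym: "leB x y \<Longrightarrow> leB y x \<Longrightarrow> x = y"
  by (auto simp: leB_def)

lemma pB_prop: "leB x (pB x y) \<and> leB y (pB x y) \<and> (\<forall>w. leB x w \<and> leB y w \<longrightarrow> leB (pB x y) w)"
proof -
  have "leB x w \<and> leB y w \<longrightarrow> leB (pB x y) w" for w
    by (cases x; cases y; cases w; simp add: leB_def)
  moreover have "leB x (pB x y) \<and> leB y (pB x y)"
    by (cases x; cases y; simp add: leB_def)
  ultimately show ?thesis by blast
qed

lemma plusB_pB: "plusB x y = pB x y"
  unfolding plusB_def
  by (rule the_equality, rule pB_prop) (meson leB_antisym pB_prop)

lemma SS_closed: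
  "\<forall>p\<in>SS. \<forall>q\<in>SS. (tA (fst p) (fst q), tA (fst (snd p)) (fst (snd q)), timesB (snd (snd p)) (snd (snd q))) \<in> SS
      \<and> (pA (fst p) (fst q), pA (fst (snd p)) (fst (snd q)), pB (snd (snd p)) (snd (snd q))) \<in> SS"
  unfolding SS_def by simp

lemma SS_fun: "(u, v, b) \<in> SS \<Longrightarrow> (u, v, b') \<in> SS \<Longrightarrow> b = b'"
  unfolding SS_def by auto

lemma SS_surj: "\<exists>u v. (u, v, b) \<in> SS"
  unfolding SS_def by (cases b) auto

lemma eval_SS:
  assumes "\<And>i. (f i, g i, \<rho> i) \<in> SS"
  shows "(eval plusA timesA f t, eval plusA timesA g t, eval plusB timesB \<rho> t) \<in> SS"
proof (induction t)
  case (Var i) then show ?case using assms by simp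
next
  case (Plus s t) then show ?case using SS_closed by (fastforce simp: plusA_pA plusB_pB)
next
  case (Times s t) then show ?case using SS_closed by (fastforce simp: timesA_tA)
qed

theorem corollary3p3:
  shows "\<forall>s t. satisfies plusA timesA s t \<longrightarrow> satisfies plusB timesB s t"
proof (intro allI impI)
  fix s t assume st: "satisfies plusA timesA s t"
  show "satisfies plusB timesB s t" unfolding satisfies_def
  proof
    fix \<rho> :: "nat \<Rightarrow> b21"
    define f where "f i = (SOME uv. (fst uv, snd uv, \<rho> i) \<in> SS)" for i
    have h: "(fst (f i), snd (f i), \<rho> i) \<in> SS" for i
      unfolding f_def by (rule someI_ex) (use SS_surj in auto)
    have 1: "(eval plusA timesA (\<lambda>i. fst (f i)) s, eval plusA timesA (\<lambda>i. snd (f i)) s, eval plusB timesB \<rho> s) \<in> SS"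
      by (rule eval_SS) (rule h)
    have 2: "(eval plusA timesA (\<lambda>i. fst (f i)) t, eval plusA timesA (\<lambda>i. snd (f i)) t, eval plusB timesB \<rho> t) \<in> SS"
      by (rule eval_SS) (rule h)
    show "eval plusB timesB \<rho> s = eval plusB timesB \<rho> t"
      using 1 2 st unfolding satisfies_def by (metis SS_fun)
  qed
qed

end
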